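(* Let $(A,\cdot,\circ)$ be a skew brace and $B$, $C$ sub-skew braces with $A = B\cdot C$ and $A = B\circ C$. If both $B$ and $C$ are trivial skew braces, then $A*A = (B*C)\cdot(C*B)$.
   Context: A skew brace is a set $A$ with two group operations $\cdot$ (often written by juxtaposition) and $\circ$ such that $a\circ(bc) = (a\circ b)\,a^{-1}\,(a\circ c)$ for all $a,b,c\in A$. $a^{-1}$ denotes the inverse in $(A,\cdot)$. Define $a*b = a^{-1}(a\circ b)b^{-1}$; for subsets $X,Y$, $X*Y$ is the subgroup of $(A,\cdot)$ generated by all $x*y$ ($x\in X,y\in Y$). A sub-skew brace is a subset that is a subgroup of both groups; it is trivial if $a\circ b=ab$ for all its elements. $A=B\cdot C$ (resp. $A=B\circ C$) means every element is $bc$ (resp. $b\circ c$) with $b\in B$, $c\in C$. *)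

theory Defs
  imports "HOL-Algebra.Algebra"
begin

definition skew_brace :: "'a monoid \<Rightarrow> 'a monoid \<Rightarrow> bool" where
  "skew_brace G H \<longleftrightarrow> group G \<and> group H \<and> carrier H = carrier G \<and>
     (\<forall>a\<in>carrier G. \<forall>b\<in>carrier G. \<forall>c\<in>carrier G.
        a \<otimes>\<^bsub>H\<^esub> (b \<otimes>\<^bsub>G\<^esub> c)
          = (a \<otimes>\<^bsub>H\<^esub> b) \<otimes>\<^bsub>G\<^esub> inv\<^bsub>G\<^esub> a \<otimes>\<^bsub>G\<^esub> (a \<otimes>\<^bsub>H\<^esub> c))"

definition brace_star :: "'a monoid \<Rightarrow> 'a monoid \<Rightarrow> 'a \<Rightarrow> 'a \<Rightarrow> 'a" where
  "brace_star G H a b = inv\<^bsub>G\<^esub> a \<otimes>\<^bsub>G\<^esub> (a \<otimes>\<^bsub>H\<^esub> b) \<otimes>\<^bsub>G\<^esub> inv\<^bsub>G\<^esub> b"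

definition brace_star_set :: "'a monoid \<Rightarrow> 'a monoid \<Rightarrow> 'a set \<Rightarrow> 'a set \<Rightarrow> 'a set" where
  "brace_star_set G H S T = generate G {brace_star G H s t | s t. s \<in> S \<and> t \<in> T}"

definition sub_skew_brace :: "'a monoid \<Rightarrow> 'a monoid \<Rightarrow> 'a set \<Rightarrow> bool" where
  "sub_skew_brace G H B \<longleftrightarrow> subgroup B G \<and> subgroup B H"

definition trivial_sub_skew_brace :: "'a monoid \<Rightarrow> 'a monoid \<Rightarrow> 'a set \<Rightarrow> bool" where
  "trivial_sub_skew_brace G H B \<longleftrightarrow> (\<forall>a\<in>B. \<forall>b\<in>B. a \<otimes>\<^bsub>H\<^esub> b = a \<otimes>\<^bsub>G\<^esub> b)"

end

theory Submission
  imports Defs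
begin

locale sbr = G: group G + H: group H for G H :: "'a monoid" +
  assumes carr: "carrier H = carrier G"
  and ax: "\<And>a b c. a \<in> carrier G \<Longrightarrow> b \<in> carrier G \<Longrightarrow> c \<in> carrier G \<Longrightarrow>
     a \<otimes>\<^bsub>H\<^esub> (b \<otimes>\<^bsub>G\<^esub> c)
          = (a \<otimes>\<^bsub>H\<^esub> b) \<otimes>\<^bsub>G\<^esub> inv\<^bsub>G\<^esub> a \<otimes>\<^bsub>G\<^esub> (a \<otimes>\<^bsub>H\<^esub> c)"
begin

definition lam where "lam a x = inv\<^bsub>G\<^esub> a \<otimes>\<^bsub>G\<^esub> (a \<otimes>\<^bsub>H\<^esub> x)"

lemma cancel1: "a \<in> carrier G \<Longrightarrow> y \<in> carrier G \<Longrightarrow> a \<otimes>\<^bsub>G\<^esub> (inv\<^bsub>G\<^esub> a \<otimes>\<^bsub>G\<^esub> y) = y"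
  by (simp add: G.m_assoc[symmetric])

lemma cancel2: "a \<in> carrier G \<Longrightarrow> y \<in> carrier G \<Longrightarrow> inv\<^bsub>G\<^esub> a \<otimes>\<^bsub>G\<^esub> (a \<otimes>\<^bsub>G\<^esub> y) = y"
  by (simp add: G.m_assoc[symmetric])

lemma Hc: "a \<in> carrier G \<Longrightarrow> b \<in> carrier G \<Longrightarrow> a \<otimes>\<^bsub>H\<^esub> b \<in> carrier G"
  using H.m_closed carr by auto

lemma lam_closed: "a \<in> carrier G \<Longrightarrow> x \<in> carrier G \<Longrightarrow> lam a x \<in> carrier G"
  unfolding lam_def by (simp add: Hc)

lemma lam_mult: "a \<in> carrier G \<Longrightarrow> x \<in> carrier G \<Longrightarrow> y \<in> carrier G \<Longrightarrow>
  lam a (x \<otimes>\<^bsub>G\<^esub> y) = lam a x \<otimes>\<^bsub>G\<^esub> lam a y"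
  unfolding lam_def by (simp add: ax Hc G.m_assoc)

lemma lam_one: "a \<in> carrier G \<Longrightarrow> lam a \<one>\<^bsub>G\<^esub> = \<one>\<^bsub>G\<^esub>"
proof -
  assume a: "a \<in> carrier G"
  have "lam a \<one>\<^bsub>G\<^esub> \<otimes>\<^bsub>G\<^esub> lam a \<one>\<^bsub>G\<^esub> = lam a \<one>\<^bsub>G\<^esub> \<otimes>\<^bsub>G\<^esub> \<one>\<^bsub>G\<^esub>"
    using lam_mult[OF a, of "\<one>\<^bsub>G\<^esub>" "\<one>\<^bsub>G\<^esub>"] a lam_closed by simp
  thus ?thesis using G.l_cancel a lam_closed by (metis G.one_closed)
qed

lemma lam_inv: "a \<in> carrier G \<Longrightarrow> x \<in> carrier G \<Longrightarrow> lam a (inv\<^bsub>G\<^esub> x) = inv\<^bsub>G\<^esub> (lam a x)"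
proof -
  assume a: "a \<in> carrier G" and x: "x \<in> carrier G"
  have "lam a (inv\<^bsub>G\<^esub> x) \<otimes>\<^bsub>G\<^esub> lam a x = \<one>\<^bsub>G\<^esub>"
    using lam_mult[OF a _ x, of "inv\<^bsub>G\<^esub> x"] lam_one[OF a] x by simp
  thus ?thesis using G.inv_equality a x lam_closed by (simp add: G.inv_equality)
qed

lemma lam_comp: "a \<in> carrier G \<Longrightarrow> b \<in> carrier G \<Longrightarrow> x \<in> carrier G \<Longrightarrow>
  lam (a \<otimes>\<^bsub>H\<^esub> b) x = lam a (lam b x)"
proof -
  assume a: "a \<in> carrier G" and b: "b \<in> carrier G" and x: "x \<in> carrier G"
  have "lam a (lam b x) = lam a (inv\<^bsub>G\<^esub> b) \<otimes>\<^bsub>G\<^esub> lam a (b \<otimes>\<^bsub>H\<^esub> x)"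
    unfolding lam_def[of b x] using lam_mult a b x Hc by simp
  also have "\<dots> = inv\<^bsub>G\<^esub> (inv\<^bsub>G\<^esub> a \<otimes>\<^bsub>G\<^esub> (a \<otimes>\<^bsub>H\<^esub> b)) \<otimes>\<^bsub>G\<^esub>
        (inv\<^bsub>G\<^esub> a \<otimes>\<^bsub>G\<^esub> ((a \<otimes>\<^bsub>H\<^esub> b) \<otimes>\<^bsub>H\<^esub> x))"
    using lam_inv a b x by (simp add: lam_def H.m_assoc carr)
  also have "\<dots> = lam (a \<otimes>\<^bsub>H\<^esub> b) x"
    using a b x Hc by (simp add: lam_def G.inv_mult_group G.m_assoc cancel1 cancel2)
  finally show ?thesis by simp
qed

abbreviation mm (infixl "\<cdot>" 70) where "x \<cdot> y \<equiv> x \<otimes>\<^bsub>G\<^esub> y"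
abbreviation ii where "ii x \<equiv> inv\<^bsub>G\<^esub> x"

lemma star_eq: "a \<in> carrier G \<Longrightarrow> x \<in> carrier G \<Longrightarrow> brace_star G H a x = lam a x \<cdot> ii x"
  unfolding brace_star_def lam_def by (simp add: G.m_assoc Hc)

lemma id_conjC:
  assumes "u \<in> carrier G" "v \<in> carrier G" "w \<in> carrier G" "y \<in> carrier G"
  shows "y \<cdot> (v \<cdot> ii w) \<cdot> ii y = ii (u \<cdot> ii y) \<cdot> (u \<cdot> v \<cdot> ii (y \<cdot> w))"
  using assms by (simp add: G.inv_mult_group G.m_assoc cancel1 cancel2)

lemma id_conjB:
  assumes c: "b1 \<in> carrier G" "v \<in> carrier G" "c \<in> carrier G" "L \<in> carrier G" "b2 \<in> carrier G" "c' \<in> carrier G"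
  and e1: "b1 \<cdot> v = L \<cdot> b2" and e2: "b1 \<cdot> c = c' \<cdot> b2"
  shows "b1 \<cdot> v \<cdot> ii c \<cdot> ii b1 = L \<cdot> ii c'"
proof -
  have "c' = b1 \<cdot> c \<cdot> ii b2" using e2 c by (simp add: G.m_assoc)
  hence "ii c' = b2 \<cdot> ii c \<cdot> ii b1" using c by (simp add: G.inv_mult_group G.m_assoc)
  thus ?thesis using e1 c by (simp add: G.m_assoc)
qed

lemma id_conjg:
  assumes "b1 \<in> carrier G" "c1 \<in> carrier G" "s \<in> carrier G"
  shows "(b1 \<cdot> c1) \<cdot> s \<cdot> ii (b1 \<cdot> c1) = b1 \<cdot> (c1 \<cdot> s \<cdot> ii c1) \<cdot> ii b1"
  using assms by (simp add: G.inv_mult_group G.m_assoc)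

lemma id_conj2:
  assumes "b1 \<in> carrier G" "t1 \<in> carrier G" "t2 \<in> carrier G"
  shows "b1 \<cdot> (ii t1 \<cdot> t2) \<cdot> ii b1 = ii (b1 \<cdot> t1 \<cdot> ii b1) \<cdot> (b1 \<cdot> t2 \<cdot> ii b1)"
  using assms by (simp add: G.inv_mult_group G.m_assoc cancel1 cancel2)

lemma id_conjm:
  assumes "g \<in> carrier G" "x \<in> carrier G" "y \<in> carrier G"
  shows "g \<cdot> (x \<cdot> y) \<cdot> ii g = (g \<cdot> x \<cdot> ii g) \<cdot> (g \<cdot> y \<cdot> ii g)"
  using assms by (simp add: G.inv_mult_group G.m_assoc cancel1 cancel2)

lemma id_conji:
  assumes "g \<in> carrier G" "x \<in> carrier G"
  shows "g \<cdot> ii x \<cdot> ii g = ii (g \<cdot> x \<cdot> ii g)"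
  using assms by (simp add: G.inv_mult_group G.m_assoc)

lemma id_gen:
  assumes "L \<in> carrier G" "M \<in> carrier G" "b \<in> carrier G" "c \<in> carrier G"
  shows "L \<cdot> M \<cdot> ii (c \<cdot> b) = (L \<cdot> ii c) \<cdot> (c \<cdot> M \<cdot> ii (c \<cdot> b))"
  using assms by (simp add: G.inv_mult_group G.m_assoc cancel1 cancel2)

lemma id_eng:
  assumes "p \<in> carrier G" "q \<in> carrier G" "p' \<in> carrier G" "q' \<in> carrier G"
  shows "(p \<cdot> q) \<cdot> (p' \<cdot> q') = (p \<cdot> (q \<cdot> p' \<cdot> ii q)) \<cdot> (q \<cdot> q')"
  using assms by (simp add: G.inv_mult_group G.m_assoc cancel1 cancel2)

lemma main:
  assumes sBG: "subgroup B G" and sBH: "subgroup B H" and sCG: "subgroup C G" and sCH: "subgroup C H"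
    and AG: "carrier G = B <#>\<^bsub>G\<^esub> C" and AH: "carrier G = B <#>\<^bsub>H\<^esub> C"
    and tB: "\<And>a b. a \<in> B \<Longrightarrow> b \<in> B \<Longrightarrow> a \<otimes>\<^bsub>H\<^esub> b = a \<cdot> b"
    and tC: "\<And>a b. a \<in> C \<Longrightarrow> b \<in> C \<Longrightarrow> a \<otimes>\<^bsub>H\<^esub> b = a \<cdot> b"
  shows "brace_star_set G H (carrier G) (carrier G)
           = brace_star_set G H B C <#>\<^bsub>G\<^esub> brace_star_set G H C B"
proof -
  have BG: "B \<subseteq> carrier G" and CG: "C \<subseteq> carrier G"
    using sBG sCG subgroup.subset by auto
  have decG: "\<exists>b\<in>B. \<exists>c\<in>C. x = b \<cdot> c" if "x \<in> carrier G" for x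
    using that AG unfolding set_mult_def by auto
  have decH: "\<exists>b\<in>B. \<exists>c\<in>C. x = b \<otimes>\<^bsub>H\<^esub> c" if "x \<in> carrier G" for x
    using that AH unfolding set_mult_def by auto
  have decG2: "\<exists>c\<in>C. \<exists>b\<in>B. x = c \<cdot> b" if x: "x \<in> carrier G" for x
  proof -
    obtain b c where bc: "b \<in> B" "c \<in> C" "ii x = b \<cdot> c" using decG[of "ii x"] x by auto
    hence "x = ii c \<cdot> ii b" using x BG CG
      by (metis G.inv_inv G.inv_mult_group subsetD)
    thus ?thesis using bc sBG sCG subgroup.m_inv_closed by metis
  qed
  have decH2: "\<exists>c\<in>C. \<exists>b\<in>B. x = c \<otimes>\<^bsub>H\<^esub> b" if x: "x \<in> carrier G" for x
  proof -
    obtain b c where bc: "b \<in> B" "c \<in> C" "inv\<^bsub>H\<^esub> x = b \<otimes>\<^bsub>H\<^esub> c"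
      using decH[of "inv\<^bsub>H\<^esub> x"] x carr by (metis H.inv_closed)
    hence "x = inv\<^bsub>H\<^esub> c \<otimes>\<^bsub>H\<^esub> inv\<^bsub>H\<^esub> b" using x BG CG carr
      by (metis H.inv_inv H.inv_mult_group subsetD)
    thus ?thesis using bc sBH sCH subgroup.m_inv_closed by metis
  qed
  have lamB: "lam b b' = b'" if "b \<in> B" "b' \<in> B" for b b'
  proof -
    have "b \<in> carrier G" "b' \<in> carrier G" using that BG by auto
    thus ?thesis using that tB cancel2 by (simp add: lam_def)
  qed
  have lamC: "lam c c' = c'" if "c \<in> C" "c' \<in> C" for c c'
  proof -
    have "c \<in> carrier G" "c' \<in> carrier G" using that CG by auto
    thus ?thesis using that tC cancel2 by (simp add: lam_def)
  qed
  define SP where "SP = {brace_star G H s t | s t. s \<in> B \<and> t \<in> C}"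
  define SQ where "SQ = {brace_star G H s t | s t. s \<in> C \<and> t \<in> B}"
  define SA where "SA = {brace_star G H s t | s t. s \<in> carrier G \<and> t \<in> carrier G}"
  define P where "P = generate G SP"
  define Q where "Q = generate G SQ"
  have bsc: "brace_star G H a x \<in> carrier G" if "a \<in> carrier G" "x \<in> carrier G" for a x
    using that by (simp add: star_eq lam_closed)
  have SPc: "SP \<subseteq> carrier G" using BG CG bsc unfolding SP_def by blast
  have SQc: "SQ \<subseteq> carrier G" using BG CG bsc unfolding SQ_def by blast
  have SAc: "SA \<subseteq> carrier G" using bsc unfolding SA_def by blast
  have Psub: "subgroup P G" unfolding P_def using G.generate_is_subgroup SPc by blast
  have Qsub: "subgroup Q G" unfolding Q_def using G.generate_is_subgroup SQc by blast
  have Pc: "P \<subseteq> carrier G" using Psub subgroup.subset by blast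
  have Qc: "Q \<subseteq> carrier G" using Qsub subgroup.subset by blast
  have conjC: "c1 \<cdot> brace_star G H b c \<cdot> ii c1
      = ii (brace_star G H b c1) \<cdot> brace_star G H b (c1 \<cdot> c)"
    if "b \<in> B" "c \<in> C" "c1 \<in> C" for b c c1
  proof -
    have bc: "b \<in> carrier G" "c \<in> carrier G" "c1 \<in> carrier G" using that BG CG by auto
    show ?thesis using bc
      by (simp add: star_eq lam_mult lam_closed id_conjC[of "lam b c1" "lam b c" c c1])
  qed
  have conjB: "b1 \<cdot> brace_star G H b c \<cdot> ii b1 \<in> SP"
    if "b \<in> B" "c \<in> C" "b1 \<in> B" for b c b1
  proof -
    have bc: "b \<in> carrier G" "c \<in> carrier G" "b1 \<in> carrier G" using that BG CG by auto
    obtain c' b2 where cb: "c' \<in> C" "b2 \<in> B" "b1 \<cdot> c = c' \<cdot> b2"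
      using decG2[of "b1 \<cdot> c"] bc by auto
    have cb': "c' \<in> carrier G" "b2 \<in> carrier G" using cb BG CG by auto
    have "b1 \<cdot> lam b c = lam b c' \<cdot> b2"
    proof -
      have "b1 \<cdot> lam b c = lam b (b1 \<cdot> c)" using bc lamB that by (simp add: lam_mult)
      also have "\<dots> = lam b c' \<cdot> b2" using cb cb' bc lamB that by (simp add: lam_mult)
      finally show ?thesis .
    qed
    hence "b1 \<cdot> lam b c \<cdot> ii c \<cdot> ii b1 = lam b c' \<cdot> ii c'"
      using bc cb cb' id_conjB[of b1 "lam b c" c "lam b c'" b2 c'] lam_closed by blast
    hence "b1 \<cdot> brace_star G H b c \<cdot> ii b1 = brace_star G H b c'"
      using bc cb' by (simp add: star_eq lam_closed G.m_assoc)
    thus ?thesis unfolding SP_def using that cb by blast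
  qed
  have conjg: "g \<cdot> s \<cdot> ii g \<in> P" if g: "g \<in> carrier G" and s: "s \<in> SP" for g s
  proof -
    obtain b c where bc: "b \<in> B" "c \<in> C" "s = brace_star G H b c" using s unfolding SP_def by auto
    obtain b1 c1 where bc1: "b1 \<in> B" "c1 \<in> C" "g = b1 \<cdot> c1" using decG[OF g] by blast
    have cs: "b1 \<in> carrier G" "c1 \<in> carrier G" "c1 \<cdot> c \<in> carrier G" "s \<in> carrier G"
      using bc bc1 BG CG s SPc by auto
    have c1c: "c1 \<cdot> c \<in> C" using subgroup.m_closed[OF sCG bc1(2) bc(2)] .
    have t1: "brace_star G H b c1 \<in> carrier G" "brace_star G H b (c1 \<cdot> c) \<in> carrier G"
      using cs bc BG by (auto intro!: bsc)
    have "g \<cdot> s \<cdot> ii g = ii (b1 \<cdot> brace_star G H b c1 \<cdot> ii b1) \<cdot> (b1 \<cdot> brace_star G H b (c1 \<cdot> c) \<cdot> ii b1)"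
      using bc1 cs t1 id_conjg conjC[OF bc(1,2) bc1(2)] id_conj2 bc(3) by simp
    moreover have "b1 \<cdot> brace_star G H b c1 \<cdot> ii b1 \<in> SP"
      using conjB bc bc1 by blast
    moreover have "b1 \<cdot> brace_star G H b (c1 \<cdot> c) \<cdot> ii b1 \<in> SP"
      using conjB bc bc1 c1c by blast
    ultimately show ?thesis unfolding P_def
      by (simp add: generate.inv generate.incl generate.eng)
  qed
  have normP: "g \<cdot> x \<cdot> ii g \<in> P" if x: "x \<in> P" and g: "g \<in> carrier G" for g x
    using x unfolding P_def
  proof (induction x rule: generate.induct)
    case one
    then show ?case using g by (simp add: generate.one)
  next
    case (incl h)
    then show ?case using conjg g unfolding P_def by blast
  next
    case (inv h)
    then have "g \<cdot> h \<cdot> ii g \<in> P" using conjg g by blast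
    then have "ii (g \<cdot> h \<cdot> ii g) \<in> P" by (rule subgroup.m_inv_closed[OF Psub])
    moreover have hc: "h \<in> carrier G" using inv.hyps SPc by auto
    ultimately show ?case unfolding P_def[symmetric] using id_conji[OF g hc] by simp
  next
    case (eng h1 h2)
    have "h1 \<in> carrier G" "h2 \<in> carrier G" using eng.hyps Pc unfolding P_def by auto
    then have "g \<cdot> (h1 \<cdot> h2) \<cdot> ii g = (g \<cdot> h1 \<cdot> ii g) \<cdot> (g \<cdot> h2 \<cdot> ii g)"
      using id_conjm g by blast
    moreover have "(g \<cdot> h1 \<cdot> ii g) \<cdot> (g \<cdot> h2 \<cdot> ii g) \<in> P"
      by (rule subgroup.m_closed[OF Psub]) (use eng.IH in \<open>simp_all add: P_def\<close>)
    ultimately show ?case unfolding P_def by simp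
  qed
  have memPQ: "x \<in> P <#>\<^bsub>G\<^esub> Q \<longleftrightarrow> (\<exists>p\<in>P. \<exists>q\<in>Q. x = p \<cdot> q)" for x
    unfolding set_mult_def by auto
  have gen_in: "brace_star G H a x \<in> P <#>\<^bsub>G\<^esub> Q" if a: "a \<in> carrier G" and x: "x \<in> carrier G" for a x
  proof -
    obtain b2 c2 where e1: "b2 \<in> B" "c2 \<in> C" "a = b2 \<otimes>\<^bsub>H\<^esub> c2" using decH[OF a] by blast
    obtain c b where e2: "c \<in> C" "b \<in> B" "a = c \<otimes>\<^bsub>H\<^esub> b" using decH2[OF a] by blast
    obtain c' b' where e3: "c' \<in> C" "b' \<in> B" "x = c' \<cdot> b'" using decG2[OF x] by blast
    obtain b3 c3 where e4: "b3 \<in> B" "c3 \<in> C" "c' \<cdot> b' = b3 \<cdot> c3" using decG[of "c' \<cdot> b'"] e3(3) x by blast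
    have cs: "b2 \<in> carrier G" "c2 \<in> carrier G" "c \<in> carrier G" "b \<in> carrier G"
      "c' \<in> carrier G" "b' \<in> carrier G" "b3 \<in> carrier G" "c3 \<in> carrier G"
      using e1 e2 e3 e4 BG CG by auto
    have l1: "lam a c' = lam b2 c'" using e1 e3 cs lamC by (simp add: lam_comp)
    have l2: "lam a b' = lam c b'" using e2 e3 cs lamB by (simp add: lam_comp)
    have "brace_star G H a x = (lam b2 c' \<cdot> ii c') \<cdot> (c' \<cdot> lam c b' \<cdot> ii (c' \<cdot> b'))"
    proof -
      have "brace_star G H a x = lam a c' \<cdot> lam a b' \<cdot> ii (c' \<cdot> b')"
        using a cs e3(3) by (simp add: star_eq lam_mult)
      also have "\<dots> = lam b2 c' \<cdot> lam c b' \<cdot> ii (c' \<cdot> b')" using l1 l2 by simp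
      also have "\<dots> = (lam b2 c' \<cdot> ii c') \<cdot> (c' \<cdot> lam c b' \<cdot> ii (c' \<cdot> b'))"
        by (rule id_gen) (use cs lam_closed in auto)
      finally show ?thesis .
    qed
    also have "c' \<cdot> lam c b' \<cdot> ii (c' \<cdot> b') = brace_star G H c (c' \<cdot> b')"
      using cs by (simp add: star_eq lam_mult lamC[OF e2(1) e3(1)])
    also have "\<dots> = brace_star G H c b3"
      unfolding e4(3) using cs
      by (simp add: star_eq lam_mult lamC[OF e2(1) e4(2)] lam_closed G.inv_mult_group G.m_assoc cancel1 cancel2)
    also have "lam b2 c' \<cdot> ii c' = brace_star G H b2 c'" using cs by (simp add: star_eq)
    finally have "brace_star G H a x = brace_star G H b2 c' \<cdot> brace_star G H c b3" .
    moreover have "brace_star G H b2 c' \<in> P" unfolding P_def SP_def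
      using e1 e3 by (blast intro: generate.incl)
    moreover have "brace_star G H c b3 \<in> Q" unfolding Q_def SQ_def
      using e2 e4 by (blast intro: generate.incl)
    ultimately show ?thesis using memPQ by blast
  qed
  have L: "generate G SA \<subseteq> P <#>\<^bsub>G\<^esub> Q"
  proof
    fix x assume "x \<in> generate G SA"
    then show "x \<in> P <#>\<^bsub>G\<^esub> Q"
    proof (induction x rule: generate.induct)
      case one
      have "\<one>\<^bsub>G\<^esub> \<in> P" "\<one>\<^bsub>G\<^esub> \<in> Q" using subgroup.one_closed[OF Psub] subgroup.one_closed[OF Qsub] by auto
      then show ?case using memPQ by force
    next
      case (incl h)
      then show ?case using gen_in unfolding SA_def by blast
    next
      case (inv h)
      then have "h \<in> P <#>\<^bsub>G\<^esub> Q" using gen_in unfolding SA_def by blast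
      then obtain p q where pq: "p \<in> P" "q \<in> Q" "h = p \<cdot> q" using memPQ by blast
      have c: "p \<in> carrier G" "q \<in> carrier G" using pq Pc Qc by auto
      have "inv\<^bsub>G\<^esub> h = (ii q \<cdot> ii p \<cdot> ii (ii q)) \<cdot> ii q"
        using c pq by (simp add: G.inv_mult_group G.m_assoc)
      moreover have "ii q \<cdot> ii p \<cdot> ii (ii q) \<in> P"
        using normP[OF subgroup.m_inv_closed[OF Psub pq(1)] G.inv_closed[OF c(2)]] .
      moreover have "ii q \<in> Q" using subgroup.m_inv_closed[OF Qsub pq(2)] .
      ultimately show ?case using memPQ by blast
    next
      case (eng h1 h2)
      obtain p q where pq: "p \<in> P" "q \<in> Q" "h1 = p \<cdot> q" using eng.IH memPQ by blast
      obtain p' q' where pq': "p' \<in> P" "q' \<in> Q" "h2 = p' \<cdot> q'" using eng.IH memPQ by blast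
      have c: "p \<in> carrier G" "q \<in> carrier G" "p' \<in> carrier G" "q' \<in> carrier G"
        using pq pq' Pc Qc by auto
      have "h1 \<cdot> h2 = (p \<cdot> (q \<cdot> p' \<cdot> ii q)) \<cdot> (q \<cdot> q')"
        unfolding pq(3) pq'(3) by (rule id_eng[OF c])
      moreover have "p \<cdot> (q \<cdot> p' \<cdot> ii q) \<in> P"
        using subgroup.m_closed[OF Psub pq(1) normP[OF pq'(1) c(2)]] .
      moreover have "q \<cdot> q' \<in> Q" using subgroup.m_closed[OF Qsub pq(2) pq'(2)] .
      ultimately show ?case using memPQ by blast
    qed
  qed
  have SLsub: "subgroup (generate G SA) G" using G.generate_is_subgroup SAc by blast
  have PL: "P \<subseteq> generate G SA" unfolding P_def
    by (rule G.mono_generate) (auto simp: SP_def SA_def dest: subsetD[OF BG] subsetD[OF CG])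
  have QL: "Q \<subseteq> generate G SA" unfolding Q_def
    by (rule G.mono_generate) (auto simp: SQ_def SA_def dest: subsetD[OF BG] subsetD[OF CG])
  have R: "P <#>\<^bsub>G\<^esub> Q \<subseteq> generate G SA"
  proof
    fix x assume "x \<in> P <#>\<^bsub>G\<^esub> Q"
    then obtain p q where "p \<in> P" "q \<in> Q" "x = p \<cdot> q" using memPQ by blast
    then show "x \<in> generate G SA" using subgroup.m_closed[OF SLsub] PL QL by blast
  qed
  have "brace_star_set G H (carrier G) (carrier G) = generate G SA"
    unfolding brace_star_set_def SA_def by simp
  moreover have "brace_star_set G H B C = P" unfolding brace_star_set_def P_def SP_def by simp
  moreover have "brace_star_set G H C B = Q" unfolding brace_star_set_def Q_def SQ_def by simp
  ultimately show ?thesis using L R by auto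
qed

end

theorem proposition3p3:
  fixes G H :: "'a monoid" and B C :: "'a set"
  assumes "skew_brace G H"
    and "sub_skew_brace G H B" and "sub_skew_brace G H C"
    and "carrier G = B <#>\<^bsub>G\<^esub> C"
    and "carrier G = B <#>\<^bsub>H\<^esub> C"
    and "trivial_sub_skew_brace G H B" and "trivial_sub_skew_brace G H C"
  shows "brace_star_set G H (carrier G) (carrier G)
           = brace_star_set G H B C <#>\<^bsub>G\<^esub> brace_star_set G H C B"
proof -
  have "sbr G H" using assms(1) unfolding skew_brace_def sbr_def sbr_axioms_def by auto
  then interpret sbr G H .
  show ?thesis
    using assms(2-7) unfolding sub_skew_brace_def trivial_sub_skew_brace_def
    by (intro main) auto
qed

end
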